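(* Let $(B,\bot,\top,\wedge,\vee)$ be a representable quantum bounded distributive lattice, and let $\neg,\widetilde{\neg}:B\to B$ be two linear maps, each of which is a quantum negation for it. Then $\neg=\widetilde{\neg}$.
   Context: $\Bbbk$ is a field of characteristic zero; coalgebras are counital coassociative with Sweedler notation $\Delta(b)=b_{(1)}\otimes b_{(2)}$. A representable quantum bounded distributive lattice is a coalgebra $B$ with group-like elements $\bot,\top\in B$ ($\Delta(\top)=\top\otimes\top$, $\varepsilon(\top)=1$, same for $\bot$) and coalgebra maps $\wedge,\vee:B\otimes B\to B$ (for the tensor product coalgebra structure $\Delta(b\otimes b')=b_{(1)}\otimes b'_{(1)}\otimes b_{(2)}\otimes b'_{(2)}$), written $b\wedge b':=\wedge(b\otimes b')$, $b\vee b':=\vee(b\otimes b')$, such that for all $b,b',b''\in B$: (associativity) $(b\wedge b')\wedge b''=b\wedge(b'\wedge b'')$, $(b\vee b')\vee b''=b\vee(b'\vee b'')$; (identity) $b\wedge\top=b$, $b\vee\bot=b$; (commutativity) $b\wedge b'=b'\wedge b$, $b\vee b'=b'\vee b$; (absorption) $b_{(1)}\wedge(b_{(2)}\vee b')=\varepsilon(b')b$, $b_{(1)}\vee(b_{(2)}\wedge b')=\varepsilon(b')b$; (distributivity) $b\vee(b'\wedge b'')=(b_{(1)}\vee b')\wedge(b_{(2)}\vee b'')$, $b\wedge(b'\vee b'')=(b_{(1)}\wedge b')\vee(b_{(2)}\wedge b'')$. A quantum negation is a linear map $\neg:B\to B$ with $\neg\circ\neg=\mathrm{id}_B$ which is a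 coalgebra map $B\to B^{o}$ into the co-opposite coalgebra, i.e. $\Delta(\neg b)=\neg(b_{(2)})\otimes\neg(b_{(1)})$ and $\varepsilon(\neg b)=\varepsilon(b)$, and which satisfies the complement axioms $\neg(b_{(1)})\vee b_{(2)}=b_{(1)}\vee\neg(b_{(2)})=\varepsilon(b)\top$ and $\neg(b_{(1)})\wedge b_{(2)}=b_{(1)}\wedge\neg(b_{(2)})=\varepsilon(b)\bot$ for all $b\in B$. A representable quantum Boolean algebra is a representable quantum bounded distributive lattice admitting a quantum negation. *)

theory Defs
  imports Complex_Main
begin

text \<open>
  B is a type 'b with a vector space structure over a field 'k of
  characteristic zero, given by the scalar multiplication scale.
  Elements of B (x) B are represented by finite lists of pairs (formal sums of
  pure tensors); B (x) B (x) B by lists of triples.  Over a field, two such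
  formal sums are equal in the algebraic tensor product iff every
  (multi)linear scalar form takes the same value on them.  Linear maps out of
  B (x) B are represented by bilinear maps B x B -> B (universal property).
  The comultiplication is a function comul :: 'b => ('b * 'b) list
  (a chosen representative of Delta b, Sweedler form).
\<close>

definition lin :: "('k::field \<Rightarrow> 'b::ab_group_add \<Rightarrow> 'b) \<Rightarrow> ('b \<Rightarrow> 'k) \<Rightarrow> bool" where
  "lin scale f \<longleftrightarrow> Vector_Spaces.linear scale (*) f"

definition bilin_form :: "('k::field \<Rightarrow> 'b::ab_group_add \<Rightarrow> 'b) \<Rightarrow> ('b \<Rightarrow> 'b \<Rightarrow> 'k) \<Rightarrow> bool" where
  "bilin_form scale h \<longleftrightarrow> (\<forall>x. lin scale (h x)) \<and> (\<forall>y. lin scale (\<lambda>x. h x y))"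

definition trilin_form :: "('k::field \<Rightarrow> 'b::ab_group_add \<Rightarrow> 'b) \<Rightarrow> ('b \<Rightarrow> 'b \<Rightarrow> 'b \<Rightarrow> 'k) \<Rightarrow> bool" where
  "trilin_form scale h \<longleftrightarrow> (\<forall>x y. lin scale (h x y)) \<and> (\<forall>x z. lin scale (\<lambda>y. h x y z))
     \<and> (\<forall>y z. lin scale (\<lambda>x. h x y z))"

definition bilin_map :: "('k::field \<Rightarrow> 'b::ab_group_add \<Rightarrow> 'b) \<Rightarrow> ('b \<Rightarrow> 'b \<Rightarrow> 'b) \<Rightarrow> bool" where
  "bilin_map scale m \<longleftrightarrow> (\<forall>x. Vector_Spaces.linear scale scale (m x))
     \<and> (\<forall>y. Vector_Spaces.linear scale scale (\<lambda>x. m x y))"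

definition teq2 :: "('k::field \<Rightarrow> 'b::ab_group_add \<Rightarrow> 'b) \<Rightarrow> ('b \<times> 'b) list \<Rightarrow> ('b \<times> 'b) list \<Rightarrow> bool" where
  "teq2 scale xs ys \<longleftrightarrow> (\<forall>h. bilin_form scale h \<longrightarrow>
      (\<Sum>(x,y)\<leftarrow>xs. h x y) = (\<Sum>(x,y)\<leftarrow>ys. h x y))"

definition coalgebra :: "('k::field \<Rightarrow> 'b::ab_group_add \<Rightarrow> 'b) \<Rightarrow> ('b \<Rightarrow> ('b \<times> 'b) list) \<Rightarrow> ('b \<Rightarrow> 'k) \<Rightarrow> bool" where
  "coalgebra scale comul eps \<longleftrightarrow>
     vector_space scale \<and>
     \<comment> \<open>Delta is linear B -> B (x) B\<close>
     (\<forall>h. bilin_form scale h \<longrightarrow> lin scale (\<lambda>b. \<Sum>(x,y)\<leftarrow>comul b. h x y)) \<and>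
     \<comment> \<open>epsilon is linear\<close>
     lin scale eps \<and>
     \<comment> \<open>counit axioms\<close>
     (\<forall>b. (\<Sum>(x,y)\<leftarrow>comul b. scale (eps x) y) = b) \<and>
     (\<forall>b. (\<Sum>(x,y)\<leftarrow>comul b. scale (eps y) x) = b) \<and>
     \<comment> \<open>coassociativity, tested against all trilinear forms\<close>
     (\<forall>h b. trilin_form scale h \<longrightarrow>
        (\<Sum>(x,y)\<leftarrow>comul b. \<Sum>(u,v)\<leftarrow>comul x. h u v y) =
        (\<Sum>(x,y)\<leftarrow>comul b. \<Sum>(u,v)\<leftarrow>comul y. h x u v))"

definition grouplike :: "('k::field \<Rightarrow> 'b::ab_group_add \<Rightarrow> 'b) \<Rightarrow> ('b \<Rightarrow> ('b \<times> 'b) list) \<Rightarrow> ('b \<Rightarrow> 'k) \<Rightarrow> 'b \<Rightarrow> bool" where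
  "grouplike scale comul eps g \<longleftrightarrow> teq2 scale (comul g) [(g, g)] \<and> eps g = 1"

text \<open>A linear map m : B (x) B -> B (given as a bilinear map) is a coalgebra map
  for the tensor product coalgebra structure on B (x) B.\<close>
definition coalg_map2 :: "('k::field \<Rightarrow> 'b::ab_group_add \<Rightarrow> 'b) \<Rightarrow> ('b \<Rightarrow> ('b \<times> 'b) list) \<Rightarrow> ('b \<Rightarrow> 'k) \<Rightarrow> ('b \<Rightarrow> 'b \<Rightarrow> 'b) \<Rightarrow> bool" where
  "coalg_map2 scale comul eps m \<longleftrightarrow> bilin_map scale m \<and>
     (\<forall>b b'. teq2 scale (comul (m b b'))
         (concat (map (\<lambda>(x,y). map (\<lambda>(u,v). (m x u, m y v)) (comul b')) (comul b)))) \<and>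
     (\<forall>b b'. eps (m b b') = eps b * eps b')"

definition rqbdl :: "('k::field_char_0 \<Rightarrow> 'b::ab_group_add \<Rightarrow> 'b) \<Rightarrow> ('b \<Rightarrow> ('b \<times> 'b) list) \<Rightarrow> ('b \<Rightarrow> 'k)
     \<Rightarrow> 'b \<Rightarrow> 'b \<Rightarrow> ('b \<Rightarrow> 'b \<Rightarrow> 'b) \<Rightarrow> ('b \<Rightarrow> 'b \<Rightarrow> 'b) \<Rightarrow> bool" where
  "rqbdl scale comul eps bt tp meet join \<longleftrightarrow>
     coalgebra scale comul eps \<and>
     grouplike scale comul eps bt \<and> grouplike scale comul eps tp \<and>
     coalg_map2 scale comul eps meet \<and> coalg_map2 scale comul eps join \<and>
     (\<forall>b b' b''. meet (meet b b') b'' = meet b (meet b' b'')) \<and>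
     (\<forall>b b' b''. join (join b b') b'' = join b (join b' b'')) \<and>
     (\<forall>b. meet b tp = b) \<and> (\<forall>b. join b bt = b) \<and>
     (\<forall>b b'. meet b b' = meet b' b) \<and> (\<forall>b b'. join b b' = join b' b) \<and>
     (\<forall>b b'. (\<Sum>(x,y)\<leftarrow>comul b. meet x (join y b')) = scale (eps b') b) \<and>
     (\<forall>b b'. (\<Sum>(x,y)\<leftarrow>comul b. join x (meet y b')) = scale (eps b') b) \<and>
     (\<forall>b b' b''. join b (meet b' b'') = (\<Sum>(x,y)\<leftarrow>comul b. meet (join x b') (join y b''))) \<and>
     (\<forall>b b' b''. meet b (join b' b'') = (\<Sum>(x,y)\<leftarrow>comul b. join (meet x b') (meet y b'')))"

definition quantum_negation :: "('k::field_char_0 \<Rightarrow> 'b::ab_group_add \<Rightarrow> 'b) \<Rightarrow> ('b \<Rightarrow> ('b \<times> 'b) list) \<Rightarrow> ('b \<Rightarrow> 'k)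
     \<Rightarrow> 'b \<Rightarrow> 'b \<Rightarrow> ('b \<Rightarrow> 'b \<Rightarrow> 'b) \<Rightarrow> ('b \<Rightarrow> 'b \<Rightarrow> 'b) \<Rightarrow> ('b \<Rightarrow> 'b) \<Rightarrow> bool" where
  "quantum_negation scale comul eps bt tp meet join neg \<longleftrightarrow>
     Vector_Spaces.linear scale scale neg \<and>
     (\<forall>b. neg (neg b) = b) \<and>
     (\<forall>b. teq2 scale (comul (neg b)) (map (\<lambda>(x,y). (neg y, neg x)) (comul b))) \<and>
     (\<forall>b. eps (neg b) = eps b) \<and>
     (\<forall>b. (\<Sum>(x,y)\<leftarrow>comul b. join (neg x) y) = scale (eps b) tp) \<and>
     (\<forall>b. (\<Sum>(x,y)\<leftarrow>comul b. join x (neg y)) = scale (eps b) tp) \<and>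
     (\<forall>b. (\<Sum>(x,y)\<leftarrow>comul b. meet (neg x) y) = scale (eps b) bt) \<and>
     (\<forall>b. (\<Sum>(x,y)\<leftarrow>comul b. meet x (neg y)) = scale (eps b) bt)"

end

theory Submission imports Defs begin

lemma lin_add: "Vector_Spaces.linear s1 s2 f \<Longrightarrow> f (x + y) = f x + f y"
  by (simp add: Vector_Spaces.linear_iff)
lemma lin_scale: "Vector_Spaces.linear s1 s2 f \<Longrightarrow> f (s1 c x) = s2 c (f x)"
  by (simp add: Vector_Spaces.linear_iff)
lemma lin_zero: "Vector_Spaces.linear s1 s2 f \<Longrightarrow> f 0 = 0"
  using lin_add[of s1 s2 f 0 0] by simp
lemma lin_sum_list: "Vector_Spaces.linear s1 s2 f \<Longrightarrow> f (sum_list (map g xs)) = sum_list (map (\<lambda>z. f (g z)) xs)"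
  by (induction xs) (auto simp: lin_add lin_zero)

lemma scale_sum_list: "vector_space s \<Longrightarrow> s c (sum_list (map g xs)) = sum_list (map (\<lambda>z. s c (g z)) xs)"
  by (induction xs) (auto simp: module.scale_right_distrib module.scale_zero_right module_iff_vector_space)

lemma sum_list_swap: "(sum_list::_\<Rightarrow>'c::comm_monoid_add) (map (\<lambda>a. sum_list (map (\<lambda>b. f a b) ys)) xs) = sum_list (map (\<lambda>b. sum_list (map (\<lambda>a. f a b) xs)) ys)"
  by (induction xs) (auto simp: sum_list_addf)

lemma vs_field: "vector_space ((*) :: 'k::field \<Rightarrow> 'k \<Rightarrow> 'k)"
  by unfold_locales (auto simp: algebra_simps)

lemma sep:
  fixes scale :: "'k::field \<Rightarrow> 'b::ab_group_add \<Rightarrow> 'b"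
  assumes vs: "vector_space scale" and eq: "\<And>f. lin scale f \<Longrightarrow> f a = f c"
  shows "a = c"
proof (rule ccontr)
  assume ne: "a \<noteq> c"
  interpret vp: vector_space_pair scale "(*) :: 'k \<Rightarrow> 'k \<Rightarrow> 'k"
    using vs vs_field by (simp add: vector_space_pair_def)
  have ind: "vp.vs1.independent {a - c}"
    using ne by (simp add: vp.vs1.independent_insert vp.vs1.span_empty)
  define f where "f = vp.construct {a - c} (\<lambda>_. 1)"
  have lf: "lin scale f" unfolding f_def lin_def by (rule vp.linear_construct[OF ind])
  have "f (a - c) = 1" unfolding f_def by (rule vp.construct_basis[OF ind]) simp
  moreover have "f (a - c) = f a - f c" using lf unfolding lin_def by (rule vp.linear_diff)
  ultimately show False using eq[OF lf] by simp
qed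


lemma lin_sum_pairs: "Vector_Spaces.linear s1 s2 f \<Longrightarrow> f (\<Sum>(x,y)\<leftarrow>l. g x y) = (\<Sum>(x,y)\<leftarrow>l. f (g x y))"
  by (induction l) (auto simp: lin_add lin_zero)
lemma scale_sum_pairs: "vector_space s \<Longrightarrow> s c (\<Sum>(x,y)\<leftarrow>l. g x y) = (\<Sum>(x,y)\<leftarrow>l. s c (g x y))"
  by (induction l) (auto simp: module.scale_right_distrib module.scale_zero_right module_iff_vector_space)
lemma sum_pairs_add: "(\<Sum>(x,y)\<leftarrow>l. (g x y + h x y :: 'c::comm_monoid_add)) = (\<Sum>(x,y)\<leftarrow>l. g x y) + (\<Sum>(x,y)\<leftarrow>l. h x y)"
  by (induction l) (auto simp: algebra_simps)
lemma sum_pairs_swap: "(\<Sum>(x,y)\<leftarrow>l1. \<Sum>(u,v)\<leftarrow>l2. (f x y u v :: 'c::comm_monoid_add)) = (\<Sum>(u,v)\<leftarrow>l2. \<Sum>(x,y)\<leftarrow>l1. f x y u v)"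
  by (induction l1) (auto simp: sum_pairs_add)

definition tri_map :: "('k::field \<Rightarrow> 'b::ab_group_add \<Rightarrow> 'b) \<Rightarrow> ('b \<Rightarrow> 'b \<Rightarrow> 'b \<Rightarrow> 'b) \<Rightarrow> bool" where
  "tri_map scale g \<longleftrightarrow> (\<forall>x y. Vector_Spaces.linear scale scale (g x y)) \<and> (\<forall>x z. Vector_Spaces.linear scale scale (\<lambda>y. g x y z))
     \<and> (\<forall>y z. Vector_Spaces.linear scale scale (\<lambda>x. g x y z))"

locale qsetup =
  fixes scale :: "'k::field \<Rightarrow> 'b::ab_group_add \<Rightarrow> 'b" and comul :: "'b \<Rightarrow> ('b \<times> 'b) list"
    and eps :: "'b \<Rightarrow> 'k" and bt tp :: 'b and meet join :: "'b \<Rightarrow> 'b \<Rightarrow> 'b" and n1 n2 :: "'b \<Rightarrow> 'b"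
  assumes vs: "vector_space scale"
  and meet_bil: "bilin_map scale meet" and join_bil: "bilin_map scale join"
  and n1_lin: "Vector_Spaces.linear scale scale n1" and n2_lin: "Vector_Spaces.linear scale scale n2"
  and Dlin: "\<And>g. bilin_map scale g \<Longrightarrow> Vector_Spaces.linear scale scale (\<lambda>b. \<Sum>(x,y)\<leftarrow>comul b. g x y)"
  and coassoc: "\<And>g b. tri_map scale g \<Longrightarrow> (\<Sum>(x,y)\<leftarrow>comul b. \<Sum>(u,v)\<leftarrow>comul x. g u v y) = (\<Sum>(x,y)\<leftarrow>comul b. \<Sum>(u,v)\<leftarrow>comul y. g x u v)"
  and counit1: "\<And>b. (\<Sum>(x,y)\<leftarrow>comul b. scale (eps x) y) = b"
  and counit2: "\<And>b. (\<Sum>(x,y)\<leftarrow>comul b. scale (eps y) x) = b"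
  and anti: "\<And>g b. bilin_map scale g \<Longrightarrow> (\<Sum>(x,y)\<leftarrow>comul (n1 b). g x y) = (\<Sum>(x,y)\<leftarrow>comul b. g (n1 y) (n1 x))"
  and meet_tp: "\<And>b. meet b tp = b" and join_bt: "\<And>b. join b bt = b" and join_comm: "\<And>a b. join a b = join b a"
  and distrib: "\<And>b b' b''. meet b (join b' b'') = (\<Sum>(x,y)\<leftarrow>comul b. join (meet x b') (meet y b''))"
  and C2: "\<And>b. (\<Sum>(x,y)\<leftarrow>comul b. join x (n2 y)) = scale (eps b) tp"
  and C3: "\<And>b. (\<Sum>(x,y)\<leftarrow>comul b. meet (n1 x) y) = scale (eps b) bt"
begin

lemma linR: "Vector_Spaces.linear scale scale (meet a)" "Vector_Spaces.linear scale scale (join a)"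
  using meet_bil join_bil by (auto simp: bilin_map_def)
lemma linL: "Vector_Spaces.linear scale scale (\<lambda>x. meet x a)" "Vector_Spaces.linear scale scale (\<lambda>x. join x a)"
  using meet_bil join_bil by (auto simp: bilin_map_def)

lemma rules:
  "meet (x + y) z = meet x z + meet y z" "meet z (x + y) = meet z x + meet z y"
  "join (x + y) z = join x z + join y z" "join z (x + y) = join z x + join z y"
  "meet (scale c x) z = scale c (meet x z)" "meet z (scale c x) = scale c (meet z x)"
  "join (scale c x) z = scale c (join x z)" "join z (scale c x) = scale c (join z x)"
  "n1 (x + y) = n1 x + n1 y" "n2 (x + y) = n2 x + n2 y"
  "n1 (scale c x) = scale c (n1 x)" "n2 (scale c x) = scale c (n2 x)"
  apply (rule lin_add[OF linL(1)])
  apply (rule lin_add[OF linR(1)])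
  apply (rule lin_add[OF linL(2)])
  apply (rule lin_add[OF linR(2)])
  apply (rule lin_scale[OF linL(1)])
  apply (rule lin_scale[OF linR(1)])
  apply (rule lin_scale[OF linL(2)])
  apply (rule lin_scale[OF linR(2)])
  apply (rule lin_add[OF n1_lin])
  apply (rule lin_add[OF n2_lin])
  apply (rule lin_scale[OF n1_lin])
  apply (rule lin_scale[OF n2_lin])
  done

lemma ssum: "scale c (\<Sum>(x,y)\<leftarrow>l. g x y) = (\<Sum>(x,y)\<leftarrow>l. scale c (g x y))"
  by (rule scale_sum_pairs[OF vs])

lemma lin_intro:
  assumes "\<And>x y. f (x + y) = f x + f y" "\<And>c x. f (scale c x) = scale c (f x)"
  shows "Vector_Spaces.linear scale scale f"
  using assms vs by (simp add: Vector_Spaces.linear_iff)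

lemma E: "n1 b = (\<Sum>(x,y)\<leftarrow>comul b. meet (n1 x) (n2 y))"
proof -
  define L where "L x q u v = join (meet (n1 q) u) (meet (n1 x) (n2 v))" for x q u v
  define K where "K p q y = (\<Sum>(u,v)\<leftarrow>comul y. L p q u v)" for p q y
  have s1: "n1 b = (\<Sum>(x,y)\<leftarrow>comul b. scale (eps y) (n1 x))"
    using lin_sum_pairs[OF n1_lin, of "\<lambda>x y. scale (eps y) x" "comul b"] counit2[of b]
    by (simp add: rules)
  also have "\<dots> = (\<Sum>(x,y)\<leftarrow>comul b. meet (n1 x) (\<Sum>(u,v)\<leftarrow>comul y. join u (n2 v)))"
    by (simp add: C2 rules meet_tp)
  also have "\<dots> = (\<Sum>(x,y)\<leftarrow>comul b. \<Sum>(u,v)\<leftarrow>comul y. meet (n1 x) (join u (n2 v)))"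
    by (simp add: lin_sum_pairs[OF linR(1)])
  also have "\<dots> = (\<Sum>(x,y)\<leftarrow>comul b. \<Sum>(u,v)\<leftarrow>comul y. \<Sum>(p,q)\<leftarrow>comul x. L p q u v)"
  proof -
    have "meet (n1 x) (join u (n2 v)) = (\<Sum>(p,q)\<leftarrow>comul x. L p q u v)" for x u v
    proof -
      have bl: "bilin_map scale (\<lambda>p q. join (meet p u) (meet q (n2 v)))"
        unfolding bilin_map_def by (auto intro!: lin_intro simp: rules)
      show ?thesis unfolding distrib anti[OF bl] L_def ..
    qed
    then show ?thesis by simp
  qed
  also have "\<dots> = (\<Sum>(x,y)\<leftarrow>comul b. \<Sum>(p,q)\<leftarrow>comul x. K p q y)"
  proof -
    have "(\<Sum>(u,v)\<leftarrow>comul y. \<Sum>(p,q)\<leftarrow>comul x. L p q u v) = (\<Sum>(p,q)\<leftarrow>comul x. \<Sum>(u,v)\<leftarrow>comul y. L p q u v)" for x y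
      by (rule sum_pairs_swap)
    then show ?thesis unfolding K_def by (simp only:)
  qed
  also have "\<dots> = (\<Sum>(x,y)\<leftarrow>comul b. \<Sum>(q,r)\<leftarrow>comul y. K x q r)"
  proof (rule coassoc)
    have "Vector_Spaces.linear scale scale (K p q)" for p q
      unfolding K_def
      by (rule Dlin) (auto simp: bilin_map_def L_def rules intro!: lin_intro)
    then show "tri_map scale K"
      unfolding tri_map_def
      by (auto simp: K_def L_def rules sum_pairs_add ssum intro!: lin_intro)
  qed
  also have "\<dots> = (\<Sum>(x,y)\<leftarrow>comul b. meet (n1 x) (n2 y))"
  proof -
    have "(\<Sum>(q,r)\<leftarrow>comul y. K x q r) = meet (n1 x) (n2 y)" for x y
    proof -
      have tl: "tri_map scale (\<lambda>q u v. L x q u v)"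
        unfolding tri_map_def L_def by (auto simp: rules intro!: lin_intro)
      have "(\<Sum>(q,r)\<leftarrow>comul y. K x q r) = (\<Sum>(s,v)\<leftarrow>comul y. \<Sum>(q,u)\<leftarrow>comul s. L x q u v)"
        unfolding K_def using coassoc[OF tl, of y] by simp
      also have "\<dots> = (\<Sum>(s,v)\<leftarrow>comul y. join (\<Sum>(q,u)\<leftarrow>comul s. meet (n1 q) u) (meet (n1 x) (n2 v)))"
      proof -
        have "join (\<Sum>(q,u)\<leftarrow>comul s. meet (n1 q) u) (meet (n1 x) (n2 v)) = (\<Sum>(q,u)\<leftarrow>comul s. L x q u v)" for s v
          unfolding L_def by (rule lin_sum_pairs[OF linL(2)])
        then show ?thesis by (simp only:)
      qed
      also have "\<dots> = (\<Sum>(s,v)\<leftarrow>comul y. scale (eps s) (meet (n1 x) (n2 v)))"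
        by (simp add: C3 rules join_bt join_comm[of bt])
      also have "\<dots> = meet (n1 x) (n2 (\<Sum>(s,v)\<leftarrow>comul y. scale (eps s) v))"
        by (simp add: lin_sum_pairs[OF linR(1)] lin_sum_pairs[OF n2_lin] rules)
      also have "\<dots> = meet (n1 x) (n2 y)" by (simp add: counit1)
      finally show ?thesis .
    qed
    then show ?thesis by simp
  qed
  finally show ?thesis .
qed

end


lemma lin_comp: "Vector_Spaces.linear s1 s2 g \<Longrightarrow> Vector_Spaces.linear s2 s3 f \<Longrightarrow> Vector_Spaces.linear s1 s3 (\<lambda>x. f (g x))"
  using Vector_Spaces.linear_compose[of s1 s2 g s3 f] by (simp add: o_def)

lemma sum_swap_list: "(\<Sum>(x,y)\<leftarrow>map prod.swap l. g x y) = (\<Sum>(x,y)\<leftarrow>l. g y x)"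
  by (induction l) auto

lemma T1:
  assumes vs: "vector_space scale" and t: "teq2 scale xs ys" and g: "bilin_map scale g"
  shows "(\<Sum>(x,y)\<leftarrow>xs. g x y) = (\<Sum>(x,y)\<leftarrow>ys. g x y)"
proof (rule sep[OF vs])
  fix f assume f: "lin scale f"
  have "bilin_form scale (\<lambda>x y. f (g x y))"
    using g f unfolding bilin_form_def bilin_map_def lin_def by (auto intro: lin_comp)
  then show "f (\<Sum>(x,y)\<leftarrow>xs. g x y) = f (\<Sum>(x,y)\<leftarrow>ys. g x y)"
    using t f unfolding teq2_def lin_def by (simp add: lin_sum_pairs)
qed

lemma T2:
  assumes c: "coalgebra scale comul eps" and g: "bilin_map scale g"
  shows "Vector_Spaces.linear scale scale (\<lambda>b. \<Sum>(x,y)\<leftarrow>comul b. g x y)"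
proof -
  have vs: "vector_space scale" using c by (simp add: coalgebra_def)
  have key: "lin scale (\<lambda>b. f (\<Sum>(x,y)\<leftarrow>comul b. g x y))" if f: "lin scale f" for f
  proof -
    have "bilin_form scale (\<lambda>x y. f (g x y))"
      using g f unfolding bilin_form_def bilin_map_def lin_def by (auto intro: lin_comp)
    then have "lin scale (\<lambda>b. \<Sum>(x,y)\<leftarrow>comul b. f (g x y))" using c by (simp add: coalgebra_def)
    then show ?thesis using f unfolding lin_def by (simp add: lin_sum_pairs)
  qed
  show ?thesis unfolding Vector_Spaces.linear_iff
  proof (intro conjI allI vs)
    fix x y show "(\<Sum>(u,v)\<leftarrow>comul (x + y). g u v) = (\<Sum>(u,v)\<leftarrow>comul x. g u v) + (\<Sum>(u,v)\<leftarrow>comul y. g u v)"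
    proof (rule sep[OF vs])
      fix f assume f: "lin scale f"
      show "f (\<Sum>(u,v)\<leftarrow>comul (x + y). g u v) = f ((\<Sum>(u,v)\<leftarrow>comul x. g u v) + (\<Sum>(u,v)\<leftarrow>comul y. g u v))"
        using lin_add[OF key[OF f, unfolded lin_def], of x y] lin_add[OF f[unfolded lin_def]] by simp
    qed
  next
    fix c x show "(\<Sum>(u,v)\<leftarrow>comul (scale c x). g u v) = scale c (\<Sum>(u,v)\<leftarrow>comul x. g u v)"
    proof (rule sep[OF vs])
      fix f assume f: "lin scale f"
      show "f (\<Sum>(u,v)\<leftarrow>comul (scale c x). g u v) = f (scale c (\<Sum>(u,v)\<leftarrow>comul x. g u v))"
        using lin_scale[OF key[OF f, unfolded lin_def], of c x] lin_scale[OF f[unfolded lin_def]] by simp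
    qed
  qed
qed

lemma T3:
  assumes c: "coalgebra scale comul eps" and g: "tri_map scale g"
  shows "(\<Sum>(x,y)\<leftarrow>comul b. \<Sum>(u,v)\<leftarrow>comul x. g u v y) = (\<Sum>(x,y)\<leftarrow>comul b. \<Sum>(u,v)\<leftarrow>comul y. g x u v)"
proof -
  have vs: "vector_space scale" using c by (simp add: coalgebra_def)
  show ?thesis
  proof (rule sep[OF vs])
    fix f assume f: "lin scale f"
    have "trilin_form scale (\<lambda>x y z. f (g x y z))"
      using g f unfolding trilin_form_def tri_map_def lin_def
      apply (intro conjI allI)
      apply (rule lin_comp[where f=f]; simp)+
      done
    then show "f (\<Sum>(x,y)\<leftarrow>comul b. \<Sum>(u,v)\<leftarrow>comul x. g u v y) = f (\<Sum>(x,y)\<leftarrow>comul b. \<Sum>(u,v)\<leftarrow>comul y. g x u v)"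
      using c f unfolding coalgebra_def lin_def by (simp add: lin_sum_pairs)
  qed
qed


lemma sum_map_neg: "(\<Sum>(x,y)\<leftarrow>map (\<lambda>(x,y). (n y, n x)) l. g x y) = (\<Sum>(x,y)\<leftarrow>l. g (n y) (n x))"
  by (induction l) auto

lemma tri_rev: "tri_map scale g \<Longrightarrow> tri_map scale (\<lambda>a b c. g c b a)"
  unfolding tri_map_def by simp

lemma bil_rev: "bilin_map scale g \<Longrightarrow> bilin_map scale (\<lambda>a b. g b a)"
  unfolding bilin_map_def by simp

lemma setup1:
  assumes R: "rqbdl scale comul eps bt tp meet join"
    and Q1: "quantum_negation scale comul eps bt tp meet join n1"
    and Q2: "quantum_negation scale comul eps bt tp meet join n2"
  shows "qsetup scale comul eps bt tp meet join n1 n2"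
proof -
  have c: "coalgebra scale comul eps" using R by (simp add: rqbdl_def)
  have vs: "vector_space scale" using c by (simp add: coalgebra_def)
  show ?thesis
  proof (rule qsetup.intro)
    fix g b assume g: "bilin_map scale g"
    have "teq2 scale (comul (n1 b)) (map (\<lambda>(x,y). (n1 y, n1 x)) (comul b))"
      using Q1 by (simp add: quantum_negation_def)
    from T1[OF vs this g] show "(\<Sum>(x,y)\<leftarrow>comul (n1 b). g x y) = (\<Sum>(x,y)\<leftarrow>comul b. g (n1 y) (n1 x))"
      unfolding sum_map_neg .
  next
    show "\<And>g. bilin_map scale g \<Longrightarrow> Vector_Spaces.linear scale scale (\<lambda>b. \<Sum>(x,y)\<leftarrow>comul b. g x y)"
      by (rule T2[OF c])
  next
    show "\<And>g b. tri_map scale g \<Longrightarrow> (\<Sum>(x,y)\<leftarrow>comul b. \<Sum>(u,v)\<leftarrow>comul x. g u v y) = (\<Sum>(x,y)\<leftarrow>comul b. \<Sum>(u,v)\<leftarrow>comul y. g x u v)"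
      by (rule T3[OF c])
  next show "vector_space scale" by (rule vs)
  next show "bilin_map scale meet" using R unfolding rqbdl_def coalg_map2_def by blast
  next show "bilin_map scale join" using R unfolding rqbdl_def coalg_map2_def by blast
  next show "Vector_Spaces.linear scale scale n1" using Q1 unfolding quantum_negation_def by blast
  next show "Vector_Spaces.linear scale scale n2" using Q2 unfolding quantum_negation_def by blast
  next show "\<And>b. (\<Sum>(x,y)\<leftarrow>comul b. scale (eps x) y) = b" using c unfolding coalgebra_def by blast
  next show "\<And>b. (\<Sum>(x,y)\<leftarrow>comul b. scale (eps y) x) = b" using c unfolding coalgebra_def by blast
  next show "\<And>b. meet b tp = b" using R unfolding rqbdl_def by blast
  next show "\<And>b. join b bt = b" using R unfolding rqbdl_def by blast
  next show "\<And>a b. join a b = join b a" using R unfolding rqbdl_def by blast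
  next show "\<And>b b' b''. meet b (join b' b'') = (\<Sum>(x,y)\<leftarrow>comul b. join (meet x b') (meet y b''))"
      using R unfolding rqbdl_def by blast
  next show "\<And>b. (\<Sum>(x,y)\<leftarrow>comul b. join x (n2 y)) = scale (eps b) tp" using Q2 unfolding quantum_negation_def by blast
  next show "\<And>b. (\<Sum>(x,y)\<leftarrow>comul b. meet (n1 x) y) = scale (eps b) bt" using Q1 unfolding quantum_negation_def by blast
  qed
qed

lemma setup2:
  assumes R: "rqbdl scale comul eps bt tp meet join"
    and Q1: "quantum_negation scale comul eps bt tp meet join n1"
    and Q2: "quantum_negation scale comul eps bt tp meet join n2"
  shows "qsetup scale (\<lambda>b. map prod.swap (comul b)) eps bt tp meet join n1 n2"
proof -
  interpret q: qsetup scale comul eps bt tp meet join n1 n2 by (rule setup1[OF R Q1 Q2])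
  have c: "coalgebra scale comul eps" using R by (simp add: rqbdl_def)
  have mc: "\<And>a b. meet a b = meet b a" using R unfolding rqbdl_def by blast
  show ?thesis
  proof (rule qsetup.intro, unfold sum_swap_list)
    fix g assume "bilin_map scale g"
    then show "Vector_Spaces.linear scale scale (\<lambda>b. \<Sum>(x,y)\<leftarrow>comul b. g y x)"
      using q.Dlin[OF bil_rev] by simp
  next
    fix g b assume "tri_map scale g"
    from q.coassoc[OF tri_rev[OF this], of b]
    show "(\<Sum>(x,y)\<leftarrow>comul b. \<Sum>(u,v)\<leftarrow>comul y. g v u x) = (\<Sum>(x,y)\<leftarrow>comul b. \<Sum>(u,v)\<leftarrow>comul x. g y v u)"
      by simp
  next
    fix g b assume "bilin_map scale g"
    from q.anti[OF bil_rev[OF this], of b]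
    show "(\<Sum>(x,y)\<leftarrow>comul (n1 b). g y x) = (\<Sum>(x,y)\<leftarrow>comul b. g (n1 x) (n1 y))" by simp
  next
    fix b b' b''
    show "meet b (join b' b'') = (\<Sum>(x,y)\<leftarrow>comul b. join (meet y b') (meet x b''))"
      using q.distrib[of b b'' b'] q.join_comm by simp
  next
    fix b
    show "(\<Sum>(x,y)\<leftarrow>comul b. join y (n2 x)) = scale (eps b) tp"
    proof -
      have "(\<Sum>(x,y)\<leftarrow>comul b. join (n2 x) y) = scale (eps b) tp" using Q2 unfolding quantum_negation_def by blast
      then show ?thesis using q.join_comm by simp
    qed
  next
    fix b
    show "(\<Sum>(x,y)\<leftarrow>comul b. meet (n1 y) x) = scale (eps b) bt"
    proof -
      have "(\<Sum>(x,y)\<leftarrow>comul b. meet x (n1 y)) = scale (eps b) bt" using Q1 unfolding quantum_negation_def by blast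
      then show ?thesis using mc by simp
    qed
  qed (rule q.vs q.meet_bil q.join_bil q.n1_lin q.n2_lin q.counit1 q.counit2 q.meet_tp q.join_bt q.join_comm)+
qed

theorem mainTheorem8:
  fixes scale :: "'k::field_char_0 \<Rightarrow> 'b::ab_group_add \<Rightarrow> 'b"
    and comul :: "'b \<Rightarrow> ('b \<times> 'b) list" and eps :: "'b \<Rightarrow> 'k"
    and bt tp :: 'b and meet join :: "'b \<Rightarrow> 'b \<Rightarrow> 'b"
    and neg neg' :: "'b \<Rightarrow> 'b"
  assumes "rqbdl scale comul eps bt tp meet join"
    and "quantum_negation scale comul eps bt tp meet join neg"
    and "quantum_negation scale comul eps bt tp meet join neg'"
  shows "neg = neg'"
proof
  fix b
  have mc: "\<And>a b. meet a b = meet b a" using assms(1) unfolding rqbdl_def by blast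
  have e1: "neg b = (\<Sum>(x,y)\<leftarrow>comul b. meet (neg x) (neg' y))"
    by (rule qsetup.E[OF setup1[OF assms(1) assms(2) assms(3)]])
  have e2: "neg' b = (\<Sum>(x,y)\<leftarrow>map prod.swap (comul b). meet (neg' x) (neg y))"
    by (rule qsetup.E[OF setup2[OF assms(1) assms(3) assms(2)]])
  show "neg b = neg' b" unfolding e1 e2 sum_swap_list using mc by simp
qed

end
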